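(* Let $k$ be a field of characteristic $p\ne2$ and $G=\mathrm{SL}_n(k)=\mathrm{SL}(V)$. Assume that $x\in G$ is an involution, $y\in G$ is a unipotent element with quadratic minimal polynomial (i.e. minimal polynomial $(T-1)^2$), and $z\in G$ is a regular unipotent element (a unipotent element with a single Jordan block of size $n$ on $V$). Then $xyz\ne1$. *)

theory Defs
  imports "Jordan_Normal_Form.Jordan_Normal_Form"
begin

definition eval_poly_mat :: "'a::field poly \<Rightarrow> 'a mat \<Rightarrow> 'a mat" where
  "eval_poly_mat p A =
     foldr (\<lambda>c M. c \<cdot>\<^sub>m 1\<^sub>m (dim_row A) + A * M) (coeffs p) (0\<^sub>m (dim_row A) (dim_row A))"

definition is_minimal_polynomial :: "'a::field mat \<Rightarrow> 'a poly \<Rightarrow> bool" where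
  "is_minimal_polynomial A p \<longleftrightarrow>
     monic p \<and> eval_poly_mat p A = 0\<^sub>m (dim_row A) (dim_row A) \<and>
     (\<forall>q. q \<noteq> 0 \<and> eval_poly_mat q A = 0\<^sub>m (dim_row A) (dim_row A) \<longrightarrow> degree p \<le> degree q)"

definition regular_unipotent :: "nat \<Rightarrow> 'a::field mat \<Rightarrow> bool" where
  "regular_unipotent n z \<longleftrightarrow> z \<in> carrier_mat n n \<and> similar_mat z (jordan_block n 1)"

end

theory Submission imports Defs begin

lemma smult0_mat[simp]: "(0::'a::field) \<cdot>\<^sub>m (A::'a mat) = 0\<^sub>m (dim_row A) (dim_col A)"
  by (rule eq_matI) auto

lemma ev_carrier[simp]: "A \<in> carrier_mat n n \<Longrightarrow> eval_poly_mat p A \<in> carrier_mat n n"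
proof -
  assume A: "A \<in> carrier_mat n n"
  have "\<And>cs. foldr (\<lambda>c M. c \<cdot>\<^sub>m 1\<^sub>m n + A * M) cs (0\<^sub>m n n) \<in> carrier_mat n n"
  proof -
    fix cs show "foldr (\<lambda>c M. c \<cdot>\<^sub>m 1\<^sub>m n + A * M) cs (0\<^sub>m n n) \<in> carrier_mat n n"
      using A by (induction cs) auto
  qed
  then show ?thesis using A unfolding eval_poly_mat_def by auto
qed

lemma ev_dims[simp]: "A \<in> carrier_mat n n \<Longrightarrow> dim_row (eval_poly_mat p A) = n"
  "A \<in> carrier_mat n n \<Longrightarrow> dim_col (eval_poly_mat p A) = n"
  by (metis carrier_matD ev_carrier)+

lemma ev_pCons: assumes A: "A \<in> carrier_mat n n"
  shows "eval_poly_mat (pCons a p) A = a \<cdot>\<^sub>m 1\<^sub>m n + A * eval_poly_mat p A"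
proof (cases "p = 0 \<and> a = 0")
  case True
  then show ?thesis using A by (simp add: eval_poly_mat_def)
next
  case False
  then have "coeffs (pCons a p) = a # coeffs p"
    by (auto simp: cCons_def)
  then show ?thesis using A by (simp add: eval_poly_mat_def)
qed

lemma ev_0[simp]: "A \<in> carrier_mat n n \<Longrightarrow> eval_poly_mat 0 A = 0\<^sub>m n n"
  by (simp add: eval_poly_mat_def)

lemma mat_add_swap: 
  assumes "A \<in> carrier_mat n m" "B \<in> carrier_mat n m" "C \<in> carrier_mat n m" "D \<in> carrier_mat n m"
  shows "(A + B) + (C + D) = (A + C) + (B + (D::'a::comm_monoid_add mat))"
proof -
  have "(A + B) + (C + D) = A + (B + (C + D))" using assms by simp
  also have "B + (C + D) = (B + C) + D" using assms by simp
  also have "B + C = C + B" using assms(2,3) by (rule comm_add_mat)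
  also have "(C + B) + D = C + (B + D)" using assms by simp
  also have "A + (C + (B + D)) = (A + C) + (B + D)" using assms by simp
  finally show ?thesis .
qed

lemma ev_add: assumes A: "A \<in> carrier_mat n n"
  shows "eval_poly_mat (p + q) A = eval_poly_mat p A + eval_poly_mat q A"
proof (induction p arbitrary: q rule: pCons_induct)
  case 0
  then show ?case using A by simp
next
  case (pCons a p)
  obtain b r where q: "q = pCons b r" by (cases q)
  have "eval_poly_mat (pCons a p + q) A = (a \<cdot>\<^sub>m 1\<^sub>m n + b \<cdot>\<^sub>m 1\<^sub>m n) + (A * eval_poly_mat p A + A * eval_poly_mat r A)"
    unfolding q add_pCons ev_pCons[OF A] pCons
    using A by (subst add_smult_distrib_right_mat[of _ n n], simp, subst mult_add_distrib_mat[of _ n n _ n], auto)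
  also have "\<dots> = eval_poly_mat (pCons a p) A + eval_poly_mat q A"
    unfolding q ev_pCons[OF A] using A by (intro mat_add_swap[of _ n n]) auto
  finally show ?case .

qed

lemma ev_smult: assumes A: "A \<in> carrier_mat n n"
  shows "eval_poly_mat (Polynomial.smult c p) A = c \<cdot>\<^sub>m eval_poly_mat p A"
proof (induction p rule: pCons_induct)
  case 0
  then show ?case using A by (auto intro!: eq_matI)
next
  case (pCons a p)
  show ?case unfolding smult_pCons ev_pCons[OF A] pCons
    using A by (subst add_smult_distrib_left_mat[of _ n n], auto simp: mult_smult_distrib[of _ n n _ n] intro!: eq_matI)
qed

lemma ev_mult: assumes A: "A \<in> carrier_mat n n"
  shows "eval_poly_mat (p * q) A = eval_poly_mat p A * eval_poly_mat q A"
proof (induction p rule: pCons_induct)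
  case 0
  then show ?case using A by simp
next
  case (pCons a p)
  have h0: "0\<^sub>m n n + A * (eval_poly_mat p A * eval_poly_mat q A) = A * (eval_poly_mat p A * eval_poly_mat q A)"
    using A by (intro left_add_zero_mat) auto
  have "eval_poly_mat (pCons a p * q) A = a \<cdot>\<^sub>m eval_poly_mat q A + A * (eval_poly_mat p A * eval_poly_mat q A)"
    using h0 A by (simp add: ev_add[OF A] ev_smult[OF A] ev_pCons[OF A] pCons)
  also have "\<dots> = eval_poly_mat (pCons a p) A * eval_poly_mat q A"
    unfolding ev_pCons[OF A] using A
    by (subst add_mult_distrib_mat[of _ n n _ _ n], auto simp: mult_smult_assoc_mat[of _ n n _ n] assoc_mult_mat[of _ n n _ n _ n])
  finally show ?case .
qed

lemma ev_one[simp]: assumes A: "A \<in> carrier_mat n n" shows "eval_poly_mat 1 A = 1\<^sub>m n"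
proof -
  have "eval_poly_mat (pCons 1 0) A = 1\<^sub>m n" unfolding ev_pCons[OF A] using A by (auto intro!: eq_matI)
  then show ?thesis by (simp add: one_pCons)
qed

lemma ev_X[simp]: assumes A: "A \<in> carrier_mat n n" shows "eval_poly_mat [:0,1:] A = A"
  unfolding ev_pCons[OF A] using A by auto

lemma ev_comm: assumes A: "A \<in> carrier_mat n n"
  shows "eval_poly_mat p A * eval_poly_mat q A = eval_poly_mat q A * eval_poly_mat p A"
  by (metis A ev_mult mult.commute)

lemma ev_power: assumes A: "A \<in> carrier_mat n n"
  shows "eval_poly_mat (p ^ k) A = eval_poly_mat p A ^\<^sub>m k"
proof (induction k)
  case 0
  then show ?case using A by simp
next
  case (Suc k)
  then show ?case using A by (simp add: ev_mult[OF A] power_Suc2 del: power_Suc)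
qed

definition pres :: "'a::field mat \<Rightarrow> nat \<Rightarrow> 'a mat \<Rightarrow> bool" where
  "pres N n M \<longleftrightarrow> M \<in> carrier_mat n n \<and> (\<forall>v\<in>carrier_vec n. N *\<^sub>v v = 0\<^sub>v n \<longrightarrow> N *\<^sub>v (M *\<^sub>v v) = 0\<^sub>v n)"

lemma pres_add: assumes N: "N \<in> carrier_mat n n" and "pres N n M" "pres N n M'"
  shows "pres N n (M + M')"
  using assms unfolding pres_def
  by (auto simp: add_mult_distrib_mat_vec[of _ n n] mult_add_distrib_mat_vec[of _ n n])

lemma smult_mat_vec: "M \<in> carrier_mat n m \<Longrightarrow> v \<in> carrier_vec m \<Longrightarrow> (c \<cdot>\<^sub>m M) *\<^sub>v v = c \<cdot>\<^sub>v (M *\<^sub>v v)"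
  by (rule eq_vecI) (auto simp: smult_scalar_prod_distrib[of _ m])

lemma zero_mat_vec[simp]: "v \<in> carrier_vec m \<Longrightarrow> 0\<^sub>m n m *\<^sub>v v = 0\<^sub>v n"
  by (rule eq_vecI) auto

lemma mat_vec_zero[simp]: "M \<in> carrier_mat n m \<Longrightarrow> M *\<^sub>v 0\<^sub>v m = 0\<^sub>v n"
  by (rule eq_vecI) auto

lemma pres_smult: assumes N: "N \<in> carrier_mat n n" and "pres N n M"
  shows "pres N n (c \<cdot>\<^sub>m M)"
  using assms unfolding pres_def
  by (auto simp: mult_mat_vec[of _ n n] smult_mat_vec[of _ n n])

lemma pres_mult: assumes N: "N \<in> carrier_mat n n" and "pres N n M" "pres N n M'"
  shows "pres N n (M * M')"
  using assms unfolding pres_def by auto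

lemma pres_one: assumes N: "N \<in> carrier_mat n n" shows "pres N n (1\<^sub>m n)"
  using assms unfolding pres_def by auto

lemma pres_ev: assumes N: "N \<in> carrier_mat n n" and M: "pres N n M"
  shows "pres N n (eval_poly_mat p M)"
proof (induction p rule: pCons_induct)
  case 0
  then show ?case using M N unfolding pres_def by auto
next
  case (pCons a p)
  have Mc: "M \<in> carrier_mat n n" using M unfolding pres_def by auto
  show ?case unfolding ev_pCons[OF Mc]
    by (intro pres_add pres_smult pres_one pres_mult N M pCons)
qed

lemma pres_pow: assumes N: "N \<in> carrier_mat n n" and M: "pres N n M"
  shows "pres N n (M ^\<^sub>m k)"
proof (induction k)
  case 0
  then show ?case using M N pres_one[OF N] unfolding pres_def by auto
next
  case (Suc k)
  then show ?case by (simp add: pres_mult[OF N _ M])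
qed

lemma pres_zero: assumes N: "N \<in> carrier_mat n n" shows "pres N n (0\<^sub>m n n)"
  using assms unfolding pres_def by auto

lemma nil_alg:
  assumes N: "N \<in> carrier_mat n n" and B: "B \<in> carrier_mat n n" and Bn: "B ^\<^sub>m n = 0\<^sub>m n n"
    and t0: "coeff t 0 = 0" and t1: "coeff t 1 \<noteq> (0::'a::field)" and pt: "pres N n (eval_poly_mat t B)"
  shows "pres N n (eval_poly_mat p B)"
proof -
  obtain a u where tu: "t = pCons a u" by (cases t)
  with t0 have a0: "a = 0" by simp
  define d where "d = coeff t 1"
  have ud: "coeff u 0 = d" unfolding d_def tu by (simp add: One_nat_def)
  have dnz: "d \<noteq> 0" using t1 d_def by simp
  have tpow: "t ^ j = monom 1 j * u ^ j" for j
  proof -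
    have "t = [:0,1:] * u" unfolding tu a0 by simp
    then have "t ^ j = [:0,1:] ^ j * u ^ j" by (metis power_mult_distrib)
    then show ?thesis by (simp add: monom_altdef)
  qed
  have ctpow: "coeff (t ^ j) i = (if i < j then 0 else coeff (u ^ j) (i - j))" for i j
    unfolding tpow coeff_monom_mult by simp
  have S: "k \<le> n \<Longrightarrow> \<forall>p. (\<forall>i < n - k. coeff p i = 0) \<longrightarrow> pres N n (eval_poly_mat p B)" for k
  proof (induction k)
    case 0
    show ?case
    proof (intro allI impI)
      fix p :: "'a poly" assume "\<forall>i<n - 0. coeff p i = 0"
      then have "monom 1 n dvd p" by (simp add: monom_1_dvd_iff')
      then obtain r where pr: "p = monom 1 n * r" by (elim dvdE)
      have "eval_poly_mat (monom 1 n) B = 0\<^sub>m n n"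
        using Bn B by (simp add: monom_altdef ev_power[OF B])
      then have "eval_poly_mat p B = 0\<^sub>m n n" unfolding pr ev_mult[OF B] using B by simp
      then show "pres N n (eval_poly_mat p B)" using pres_zero[OF N] by simp
    qed
  next
    case (Suc k)
    then have IH: "\<forall>p. (\<forall>i < n - k. coeff p i = 0) \<longrightarrow> pres N n (eval_poly_mat p B)" by simp
    define j where "j = n - Suc k"
    have jk: "n - k = Suc j" unfolding j_def using Suc.prems by simp
    define r where "r = t ^ j + Polynomial.smult (-1) (monom (d ^ j) j)"
    have cr: "\<forall>i < n - k. coeff r i = 0"
      unfolding jk r_def by (auto simp: ctpow coeff_monom coeff_0_power ud)
    have pr: "pres N n (eval_poly_mat r B)" using IH cr by blast
    have ptj: "pres N n (eval_poly_mat (t ^ j) B)"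
      unfolding ev_power[OF B] by (rule pres_pow[OF N pt])
    have mj: "monom 1 j = Polynomial.smult (inverse (d ^ j)) (t ^ j + Polynomial.smult (-1) r)"
      unfolding r_def using dnz by (simp add: smult_monom minus_monom)
    have pmj: "pres N n (eval_poly_mat (monom 1 j) B)"
      unfolding mj ev_smult[OF B] ev_add[OF B]
      by (intro pres_smult pres_add N ptj pr)
    show ?case
    proof (intro allI impI)
      fix p :: "'a poly" assume cp: "\<forall>i<n - Suc k. coeff p i = 0"
      define p' where "p' = p + Polynomial.smult (-1) (monom (coeff p j) j)"
      have "\<forall>i < n - k. coeff p' i = 0"
        unfolding jk p'_def using cp j_def by (auto simp: coeff_monom less_Suc_eq)
      then have pp': "pres N n (eval_poly_mat p' B)" using IH by blast
      have "p = Polynomial.smult (coeff p j) (monom 1 j) + p'"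
        unfolding p'_def by (simp add: smult_monom minus_monom[symmetric])
      then show "pres N n (eval_poly_mat p B)"
        by (metis ev_add[OF B] ev_smult[OF B] pres_add[OF N] pres_smult[OF N] pmj pp')
    qed
  qed
  show ?thesis using S[of n] by simp
qed

lemma two_nz: assumes "CHAR('a::field) \<noteq> 2" shows "(2::'a) \<noteq> 0"
proof
  assume "(2::'a) = 0"
  then have "CHAR('a) dvd 2" by (metis of_nat_eq_0_iff_char_dvd of_nat_numeral)
  moreover have "CHAR('a) \<noteq> 1"
    by (metis of_nat_1 one_neq_zero of_nat_eq_0_iff_char_dvd dvd_refl)
  moreover have "CHAR('a) \<noteq> 0" using \<open>CHAR('a) dvd 2\<close> by (metis dvd_0_left zero_neq_numeral)
  moreover have "CHAR('a) \<le> 2" using dvd_imp_le[OF \<open>CHAR('a) dvd 2\<close>] by simp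
  moreover have "\<And>c::nat. c \<noteq> 1 \<Longrightarrow> c \<noteq> 0 \<Longrightarrow> c \<le> 2 \<Longrightarrow> c \<noteq> 2 \<Longrightarrow> False" by arith
  ultimately show False using assms by blast
qed

lemma minpoly_sq: assumes y: "y \<in> carrier_mat n n" and "is_minimal_polynomial y ([:-1, 1:] ^ 2)"
  shows "(y - 1\<^sub>m n) * (y - 1\<^sub>m n) = 0\<^sub>m n n"
proof -
  have "eval_poly_mat ([:-1, 1:] ^ 2) y = 0\<^sub>m n n"
    using assms y unfolding is_minimal_polynomial_def by auto
  moreover have "eval_poly_mat [:-1, 1:] y = y - 1\<^sub>m n"
    unfolding ev_pCons[OF y] using y by (auto intro!: eq_matI)
  ultimately show ?thesis unfolding ev_power[OF y] using y
    by (simp add: numeral_2_eq_2)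
qed

lemma reg_nil: assumes z: "z \<in> carrier_mat n n" and "regular_unipotent n z"
  shows "(z - 1\<^sub>m n) ^\<^sub>m n = 0\<^sub>m n n"
proof -
  from assms obtain P Q where w: "similar_mat_wit z (jordan_block n 1) P Q"
    unfolding regular_unipotent_def similar_mat_def by auto
  from w have P: "P \<in> carrier_mat n n" and Q: "Q \<in> carrier_mat n n" and PQ: "P * Q = 1\<^sub>m n"
    and QP: "Q * P = 1\<^sub>m n" and zJ: "z = P * jordan_block n 1 * Q"
    using z unfolding similar_mat_wit_def Let_def by auto
  have J0: "jordan_block n (1::'a) - 1\<^sub>m n = jordan_block n 0"
    by (auto intro!: eq_matI)
  have "P * jordan_block n 0 * Q = P * jordan_block n 1 * Q - P * 1\<^sub>m n * Q"
    unfolding J0[symmetric] using P Q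
    by (simp add: mult_minus_distrib_mat[of _ n n _ n] minus_mult_distrib_mat[of _ n n _ _ n])
  then have "z - 1\<^sub>m n = P * jordan_block n 0 * Q" using zJ PQ P by simp
  then have w0: "similar_mat_wit (z - 1\<^sub>m n) (jordan_block n 0) P Q"
    using P Q PQ QP z unfolding similar_mat_wit_def Let_def by auto
  have "jordan_block n (0::'a) ^\<^sub>m n = 0\<^sub>m n n"
    unfolding jordan_block_zero_pow by (auto intro!: eq_matI)
  then show ?thesis using similar_mat_wit_pow_id[OF w0, of n] P Q by simp
qed

lemma geo: "[:1,1:] * (\<Sum>i<m. monom ((-1::'a::comm_ring_1)^i) i) = 1 + monom (- ((-1)^m)) m"
proof (induction m)
  case 0
  then show ?case by (simp add: monom_0 one_pCons)
next
  case (Suc m)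
  have e: "[:1,1:] * monom c m = monom c m + monom c (Suc m)" for c :: 'a
    by (simp add: monom_Suc)
  show ?case unfolding sum.lessThan_Suc distrib_left Suc e
    by (simp add: minus_monom[symmetric])
qed

lemma one_smult_mat[simp]: "(1::'a::ring_1) \<cdot>\<^sub>m A = A"
  by (rule eq_matI) auto

lemma mat_eq_vecs: assumes "A \<in> carrier_mat n m" "A' \<in> carrier_mat n m"
  and "\<And>v. v \<in> carrier_vec m \<Longrightarrow> A *\<^sub>v v = A' *\<^sub>v v"
shows "A = (A'::'a::semiring_1 mat)"
proof (rule eq_matI)
  fix i j assume ij: "i < dim_row A'" "j < dim_col A'"
  have ij': "i < n" "j < m" using ij assms by auto
  have "(A *\<^sub>v unit_vec m j) $ i = (A' *\<^sub>v unit_vec m j) $ i" using assms(3)[of "unit_vec m j"] by (metis unit_vec_carrier)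
  moreover have "(A *\<^sub>v unit_vec m j) $ i = A $$ (i, j)" using assms(1) ij' by auto
  moreover have "(A' *\<^sub>v unit_vec m j) $ i = A' $$ (i, j)" using assms(2) ij' by auto
  ultimately show "A $$ (i, j) = A' $$ (i, j)" by simp
qed (use assms in auto)

lemma mat_vec_uminus: "A \<in> carrier_mat n m \<Longrightarrow> u \<in> carrier_vec m \<Longrightarrow> A *\<^sub>v (- u) = - (A *\<^sub>v (u::'a::ring vec))"
  by (rule eq_vecI) auto

lemma lin1: "(a::'a::ab_group_add) = b - c \<Longrightarrow> b + d = c \<Longrightarrow> a = - d"
  by (metis add_diff_cancel_left' minus_diff_eq)

lemma lin2: assumes "(a+b) + (nv+nb) = q - nv" "q + bq = a" "bq + bqb = b" "nb + bqb = 0"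
  shows "2*(nv+bq) = (0::'a::comm_ring_1)"
proof -
  have nb: "nb = - bqb" using assms(4) by (simp add: eq_neg_iff_add_eq_0)
  have q: "q = a - bq" using assms(2) by (simp add: eq_diff_eq)
  have b: "b = bq + bqb" using assms(3) by simp
  have "(a + (bq + bqb)) + (nv + - bqb) = (a - bq) - nv" using assms(1) nb q b by simp
  then show ?thesis by (simp add: algebra_simps)
qed
lemma lin3: "x = q - nv \<Longrightarrow> nv + bq = 0 \<Longrightarrow> q + bq = (a::'a::comm_ring_1) \<Longrightarrow> x = a"
  by (metis add_diff_cancel_left' diff_minus_eq_add eq_neg_iff_add_eq_0 add.commute)

lemma vidx: "u = w \<Longrightarrow> u $ i = w $ i" by simp

theorem lemma4p1:
  fixes x y z :: "'a::field mat" and n :: nat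
  assumes "CHAR('a) \<noteq> 2"
    and "x \<in> carrier_mat n n" and "det x = 1"
    and "x * x = 1\<^sub>m n" and "x \<noteq> 1\<^sub>m n"
    and "y \<in> carrier_mat n n" and "det y = 1"
    and "is_minimal_polynomial y ([:-1, 1:] ^ 2)"
    and "z \<in> carrier_mat n n" and "det z = 1"
    and "regular_unipotent n z"
  shows "x * y * z \<noteq> 1\<^sub>m n"
proof
  assume xyz: "x * y * z = 1\<^sub>m n"
  have xc: "x \<in> carrier_mat n n" and yc: "y \<in> carrier_mat n n" and zc: "z \<in> carrier_mat n n"
    using assms by auto
  have two: "(2::'a) \<noteq> 0" using two_nz assms(1) by blast
  define N where "N = y - 1\<^sub>m n"
  define B where "B = z - 1\<^sub>m n"
  have Nc: "N \<in> carrier_mat n n" and Bc: "B \<in> carrier_mat n n" unfolding N_def B_def using yc zc by auto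
  have NN: "N * N = 0\<^sub>m n n" unfolding N_def using minpoly_sq[OF yc assms(8)] .
  have Bn: "B ^\<^sub>m n = 0\<^sub>m n n" unfolding B_def using reg_nil[OF zc assms(11)] .
  define s where "s = (\<Sum>i<n+2. monom ((-1::'a)^i) i)"
  define zi where "zi = eval_poly_mat s B"
  have zic: "zi \<in> carrier_mat n n" unfolding zi_def using Bc by simp
  have zE: "eval_poly_mat [:1,1:] B = z"
    unfolding ev_pCons[OF Bc] using Bc zc unfolding B_def by (auto intro!: eq_matI)
  have hmon: "eval_poly_mat (monom c (n+2)) B = 0\<^sub>m n n" for c
  proof -
    have "monom c (n+2) = monom 1 n * monom c 2" by (simp add: mult_monom)
    moreover have "eval_poly_mat (monom 1 n) B = 0\<^sub>m n n"
      using Bn Bc by (simp add: monom_altdef ev_power[OF Bc])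
    ultimately show ?thesis using Bc by (simp add: ev_mult[OF Bc])
  qed
  have zzi: "z * zi = 1\<^sub>m n"
  proof -
    have "z * zi = eval_poly_mat ([:1,1:] * s) B" unfolding zi_def ev_mult[OF Bc] zE ..
    also have "\<dots> = 1\<^sub>m n" unfolding s_def geo ev_add[OF Bc] hmon using Bc by simp
    finally show ?thesis .
  qed
  have ziz: "zi * z = 1\<^sub>m n" using zzi ev_comm[OF Bc, of s "[:1,1:]"] unfolding zi_def zE by simp
  define t where "t = [:1,1:] + Polynomial.smult (-1) s"
  define T where "T = eval_poly_mat t B"
  have Tc: "T \<in> carrier_mat n n" unfolding T_def using Bc by simp
  have TE: "T = z + (-1) \<cdot>\<^sub>m zi" unfolding T_def t_def ev_add[OF Bc] ev_smult[OF Bc] zE zi_def ..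
  have cs: "coeff s i = (if i < n+2 then (-1)^i else 0)" for i
    unfolding s_def coeff_sum coeff_monom by (simp add: sum.delta)
  have ct0: "coeff t 0 = 0" unfolding t_def by (simp add: cs)
  have ct1: "coeff t 1 = 2" unfolding t_def by (simp add: cs)
  have yv: "y *\<^sub>v u = u + N *\<^sub>v u" if u: "u \<in> carrier_vec n" for u
    unfolding N_def using u yc by (intro eq_vecI) (auto simp: minus_mult_distrib_mat_vec[of _ n n])
  have zv: "z *\<^sub>v u = u + B *\<^sub>v u" if u: "u \<in> carrier_vec n" for u
    unfolding B_def using u zc by (intro eq_vecI) (auto simp: minus_mult_distrib_mat_vec[of _ n n])
  have NNv: "N *\<^sub>v (N *\<^sub>v u) = 0\<^sub>v n" if u: "u \<in> carrier_vec n" for u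
    using u Nc NN by (simp add: assoc_mult_mat_vec[symmetric, of _ n n _ n])
  have zziv: "z *\<^sub>v (zi *\<^sub>v u) = u" if u: "u \<in> carrier_vec n" for u
    using u zc zic zzi by (simp add: assoc_mult_mat_vec[symmetric, of _ n n _ n])
  have zizv: "zi *\<^sub>v (z *\<^sub>v u) = u" if u: "u \<in> carrier_vec n" for u
    using u zc zic ziz by (simp add: assoc_mult_mat_vec[symmetric, of _ n n _ n])
  have Tv: "T *\<^sub>v u = z *\<^sub>v u - zi *\<^sub>v u" if u: "u \<in> carrier_vec n" for u
    unfolding TE using u zc zic by (intro eq_vecI) (auto simp: add_mult_distrib_mat_vec[of _ n n])
  have xv: "x *\<^sub>v v = y *\<^sub>v (z *\<^sub>v v)" if v: "v \<in> carrier_vec n" for v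
  proof -
    have "((x * y) * z) *\<^sub>v v = x *\<^sub>v (y *\<^sub>v (z *\<^sub>v v))"
      unfolding assoc_mult_mat_vec[OF mult_carrier_mat[OF xc yc] zc v]
      by (rule assoc_mult_mat_vec[OF xc yc mult_mat_vec_carrier[OF zc v]])
    then have "x *\<^sub>v (y *\<^sub>v (z *\<^sub>v v)) = v"
      using xyz v by simp
    then have "x *\<^sub>v (x *\<^sub>v (y *\<^sub>v (z *\<^sub>v v))) = x *\<^sub>v v" by simp
    moreover have "x *\<^sub>v (x *\<^sub>v u) = u" if "u \<in> carrier_vec n" for u
    proof -
      have "(x * x) *\<^sub>v u = x *\<^sub>v (x *\<^sub>v u)" using xc that by simp
      then show ?thesis using assms(4) that by simp
    qed
    ultimately show ?thesis using v yc zc by simp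
  qed
  have yzyz: "y *\<^sub>v (z *\<^sub>v (y *\<^sub>v (z *\<^sub>v v))) = v" if v: "v \<in> carrier_vec n" for v
  proof -
    have "(x * x) *\<^sub>v v = x *\<^sub>v (x *\<^sub>v v)" using xc v by simp
    then have "x *\<^sub>v (x *\<^sub>v v) = v" using assms(4) v by simp
    then show ?thesis using xv v xc yc zc by simp
  qed
  have S1: "y *\<^sub>v (z *\<^sub>v v) = zi *\<^sub>v v - zi *\<^sub>v (N *\<^sub>v v)" if v: "v \<in> carrier_vec n" for v
  proof -
    define w where "w = zi *\<^sub>v (v - N *\<^sub>v v)"
    have wc: "w \<in> carrier_vec n" unfolding w_def using v zic Nc by simp
    have "y *\<^sub>v (z *\<^sub>v w) = y *\<^sub>v (v - N *\<^sub>v v)" unfolding w_def using zziv v Nc by simp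
    also have "\<dots> = v"
      using yv[of "v - N *\<^sub>v v"] NNv[OF v] v Nc
      by (intro eq_vecI) (auto simp: mult_minus_distrib_mat_vec[of _ n n])
    finally have "y *\<^sub>v (z *\<^sub>v w) = v" .
    then have "y *\<^sub>v (z *\<^sub>v v) = w" using yzyz[OF wc] by simp
    also have "w = zi *\<^sub>v v - zi *\<^sub>v (N *\<^sub>v v)" unfolding w_def using v zic Nc
      by (simp add: mult_minus_distrib_mat_vec[of _ n n])
    finally show ?thesis .
  qed
  have S1w: "z *\<^sub>v w + N *\<^sub>v (z *\<^sub>v w) = zi *\<^sub>v w" if w: "w \<in> carrier_vec n" "N *\<^sub>v w = 0\<^sub>v n" for w
  proof -
    have "zi *\<^sub>v (N *\<^sub>v w) = 0\<^sub>v n" using w zic by simp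
    then have "y *\<^sub>v (z *\<^sub>v w) = zi *\<^sub>v w" using S1[OF w(1)] w zic by simp
    then show ?thesis using yv[of "z *\<^sub>v w"] w zc by simp
  qed
  have presT: "pres N n T" unfolding pres_def
  proof (intro conjI ballI impI Tc)
    fix w :: "'a vec" assume w: "w \<in> carrier_vec n" "N *\<^sub>v w = 0\<^sub>v n"
    have "T *\<^sub>v w = - (N *\<^sub>v (z *\<^sub>v w))"
    proof (rule eq_vecI)
      fix i assume "i < dim_vec (- (N *\<^sub>v (z *\<^sub>v w)))"
      then have i: "i < n" using Nc by simp
      have a: "(T *\<^sub>v w) $ i = (z *\<^sub>v w) $ i - (zi *\<^sub>v w) $ i" using Tv[OF w(1)] i zc zic by simp
      have b: "(z *\<^sub>v w) $ i + (N *\<^sub>v (z *\<^sub>v w)) $ i = (zi *\<^sub>v w) $ i"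
        using vidx[OF S1w[OF w], of i] i w zc zic Nc by simp
      have "(- (N *\<^sub>v (z *\<^sub>v w))) $ i = - ((N *\<^sub>v (z *\<^sub>v w)) $ i)" using i Nc by simp
      then show "(T *\<^sub>v w) $ i = (- (N *\<^sub>v (z *\<^sub>v w))) $ i" using lin1[OF a b] by simp
    qed (use Tc Nc in simp)
    then show "N *\<^sub>v (T *\<^sub>v w) = 0\<^sub>v n" using NNv[of "z *\<^sub>v w"] w zc Nc by (simp add: mat_vec_uminus[of _ n n])
  qed
  have pall: "pres N n (eval_poly_mat p B)" for p
    by (rule nil_alg[OF Nc Bc Bn ct0 _ presT[unfolded T_def]]) (use ct1 two in simp)
  have presB: "pres N n B" using pall[of "[:0,1:]"] Bc by simp
  have presZi: "pres N n zi" using pall[of s] unfolding zi_def .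
  have presBv: "N *\<^sub>v (B *\<^sub>v w) = 0\<^sub>v n" if "w \<in> carrier_vec n" "N *\<^sub>v w = 0\<^sub>v n" for w
    using presB that unfolding pres_def by blast
  have S4: "zi *\<^sub>v w = w + B *\<^sub>v w" if w: "w \<in> carrier_vec n" "N *\<^sub>v w = 0\<^sub>v n" for w
  proof -
    have "N *\<^sub>v (z *\<^sub>v w) = 0\<^sub>v n"
      using zv[OF w(1)] presBv[OF w] w Bc Nc by (simp add: mult_add_distrib_mat_vec[of _ n n])
    then show ?thesis using S1w[OF w] zv[OF w(1)] w zc Bc by simp
  qed
  have S5: "\<forall>w. w \<in> carrier_vec n \<longrightarrow> N *\<^sub>v w = 0\<^sub>v n \<longrightarrow> (B ^\<^sub>m k) *\<^sub>v w = 0\<^sub>v n \<longrightarrow> B *\<^sub>v w = 0\<^sub>v n" for k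
  proof (induction k)
    case 0
    then show ?case using Bc by auto
  next
    case (Suc k)
    show ?case
    proof (intro allI impI)
      fix w :: "'a vec" assume w: "w \<in> carrier_vec n" "N *\<^sub>v w = 0\<^sub>v n" and bk: "(B ^\<^sub>m Suc k) *\<^sub>v w = 0\<^sub>v n"
      have Bwc: "B *\<^sub>v w \<in> carrier_vec n" using w Bc by simp
      have "(B ^\<^sub>m k) *\<^sub>v (B *\<^sub>v w) = 0\<^sub>v n" using bk w Bc by (simp add: assoc_mult_mat_vec[of _ n n _ n])
      then have BB: "B *\<^sub>v (B *\<^sub>v w) = 0\<^sub>v n" using Suc.IH Bwc presBv[OF w] by blast
      have "z *\<^sub>v (zi *\<^sub>v w) = w" using zziv w by simp
      then have "z *\<^sub>v (w + B *\<^sub>v w) = w" using S4[OF w] by simp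
      then have e: "(w + B *\<^sub>v w) + B *\<^sub>v (w + B *\<^sub>v w) = w" using zv[of "w + B *\<^sub>v w"] w Bc by simp
      have e2: "B *\<^sub>v (w + B *\<^sub>v w) = B *\<^sub>v w + B *\<^sub>v (B *\<^sub>v w)"
        using w Bc by (simp add: mult_add_distrib_mat_vec[of _ n n])
      have h2: "(2::'a) \<cdot>\<^sub>v (B *\<^sub>v w) = 0\<^sub>v n"
      proof (rule eq_vecI)
        fix i assume "i < dim_vec (0\<^sub>v n :: 'a vec)"
        then have i: "i < n" by simp
        have "w $ i + (B *\<^sub>v w) $ i + ((B *\<^sub>v w) $ i + (B *\<^sub>v (B *\<^sub>v w)) $ i) = w $ i"
          using vidx[OF e, of i] e2 i w Bc by simp
        moreover have "(B *\<^sub>v (B *\<^sub>v w)) $ i = 0" using BB i by simp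
        ultimately show "((2::'a) \<cdot>\<^sub>v (B *\<^sub>v w)) $ i = (0\<^sub>v n) $ i" using i Bc by (simp add: algebra_simps)
      qed (use Bc in simp)
      show "B *\<^sub>v w = 0\<^sub>v n"
      proof (rule eq_vecI)
        fix i assume "i < dim_vec (0\<^sub>v n :: 'a vec)"
        then have i: "i < n" by simp
        have "2 * (B *\<^sub>v w) $ i = 0" using vidx[OF h2, of i] i Bc by simp
        then show "(B *\<^sub>v w) $ i = (0\<^sub>v n) $ i" using two i by simp
      qed (use Bc in simp)

    qed
  qed
  have S6: "B *\<^sub>v (N *\<^sub>v v) = 0\<^sub>v n" if v: "v \<in> carrier_vec n" for v
    using S5[of n] NNv[OF v] Bn v Nc by simp
  have S7: "zi *\<^sub>v (N *\<^sub>v v) = N *\<^sub>v v" if v: "v \<in> carrier_vec n" for v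
    using S4[of "N *\<^sub>v v"] NNv[OF v] S6[OF v] v Nc by simp
  have S8: "\<forall>v. v \<in> carrier_vec n \<longrightarrow> (B ^\<^sub>m k) *\<^sub>v v = 0\<^sub>v n \<longrightarrow> N *\<^sub>v v + B *\<^sub>v (zi *\<^sub>v v) = 0\<^sub>v n" for k
  proof (induction k)
    case 0
    then show ?case using Bc Nc zic by auto
  next
    case (Suc k)
    show ?case
    proof (intro allI impI)
      fix v :: "'a vec" assume v: "v \<in> carrier_vec n" and bk: "(B ^\<^sub>m Suc k) *\<^sub>v v = 0\<^sub>v n"
      have Bvc: "B *\<^sub>v v \<in> carrier_vec n" using v Bc by simp
      have "(B ^\<^sub>m k) *\<^sub>v (B *\<^sub>v v) = 0\<^sub>v n" using bk v Bc by (simp add: assoc_mult_mat_vec[of _ n n _ n])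
      then have IH: "N *\<^sub>v (B *\<^sub>v v) + B *\<^sub>v (zi *\<^sub>v (B *\<^sub>v v)) = 0\<^sub>v n" using Suc.IH Bvc by blast
      have F1: "(v + B *\<^sub>v v) + (N *\<^sub>v v + N *\<^sub>v (B *\<^sub>v v)) = zi *\<^sub>v v - N *\<^sub>v v"
      proof -
        have "y *\<^sub>v (z *\<^sub>v v) = zi *\<^sub>v v - N *\<^sub>v v" using S1[OF v] S7[OF v] by simp
        moreover have "y *\<^sub>v (z *\<^sub>v v) = z *\<^sub>v v + N *\<^sub>v (z *\<^sub>v v)" using yv v zc by simp
        moreover have "N *\<^sub>v (z *\<^sub>v v) = N *\<^sub>v v + N *\<^sub>v (B *\<^sub>v v)"
          using zv[OF v] v Bc Nc by (simp add: mult_add_distrib_mat_vec[of _ n n])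
        ultimately show ?thesis using zv[OF v] by simp
      qed
      have F3: "zi *\<^sub>v v + B *\<^sub>v (zi *\<^sub>v v) = v" using zziv[OF v] zv[of "zi *\<^sub>v v"] v zic by simp
      have F4: "B *\<^sub>v (zi *\<^sub>v v) + B *\<^sub>v (zi *\<^sub>v (B *\<^sub>v v)) = B *\<^sub>v v"
      proof -
        have "zi *\<^sub>v (v + B *\<^sub>v v) = v" using zizv[OF v] zv[OF v] by simp
        then have "zi *\<^sub>v v + zi *\<^sub>v (B *\<^sub>v v) = v" using v Bc zic by (simp add: mult_add_distrib_mat_vec[of _ n n])
        then have "B *\<^sub>v (zi *\<^sub>v v + zi *\<^sub>v (B *\<^sub>v v)) = B *\<^sub>v v" by simp
        then show ?thesis using v Bc zic by (simp add: mult_add_distrib_mat_vec[of _ n n])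
      qed
      show "N *\<^sub>v v + B *\<^sub>v (zi *\<^sub>v v) = 0\<^sub>v n"
      proof (rule eq_vecI)
        fix i assume "i < dim_vec (0\<^sub>v n :: 'a vec)"
        then have i: "i < n" by simp
        note dims = v Bc Nc zic i
        have f1: "(v $ i + (B *\<^sub>v v) $ i) + ((N *\<^sub>v v) $ i + (N *\<^sub>v (B *\<^sub>v v)) $ i) = (zi *\<^sub>v v) $ i - (N *\<^sub>v v) $ i"
          using vidx[OF F1, of i] dims by (simp del: index_mult_mat_vec)
        have f3: "(zi *\<^sub>v v) $ i + (B *\<^sub>v (zi *\<^sub>v v)) $ i = v $ i"
          using vidx[OF F3, of i] dims by (simp del: index_mult_mat_vec)
        have f4: "(B *\<^sub>v (zi *\<^sub>v v)) $ i + (B *\<^sub>v (zi *\<^sub>v (B *\<^sub>v v))) $ i = (B *\<^sub>v v) $ i"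
          using vidx[OF F4, of i] dims by (simp del: index_mult_mat_vec)
        have f5: "(N *\<^sub>v (B *\<^sub>v v)) $ i + (B *\<^sub>v (zi *\<^sub>v (B *\<^sub>v v))) $ i = 0"
          using vidx[OF IH, of i] dims by (simp del: index_mult_mat_vec)
        have "2 * ((N *\<^sub>v v) $ i + (B *\<^sub>v (zi *\<^sub>v v)) $ i) = 0" by (rule lin2[OF f1 f3 f4 f5])
        then have "(N *\<^sub>v v) $ i + (B *\<^sub>v (zi *\<^sub>v v)) $ i = 0" using two by (metis mult_eq_0_iff)
        then show "(N *\<^sub>v v + B *\<^sub>v (zi *\<^sub>v v)) $ i = (0\<^sub>v n) $ i"
          using two dims by (simp del: index_mult_mat_vec)
      qed (use Nc Bc in simp)
    qed
  qed
  have "x = 1\<^sub>m n"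
  proof (rule mat_eq_vecs[OF xc one_carrier_mat])
    fix v :: "'a vec" assume v: "v \<in> carrier_vec n"
    have M: "N *\<^sub>v v + B *\<^sub>v (zi *\<^sub>v v) = 0\<^sub>v n" using S8[of n] v Bn by simp
    have X: "x *\<^sub>v v = zi *\<^sub>v v - N *\<^sub>v v" using xv[OF v] S1[OF v] S7[OF v] by simp
    have F3: "zi *\<^sub>v v + B *\<^sub>v (zi *\<^sub>v v) = v" using zziv[OF v] zv[of "zi *\<^sub>v v"] v zic by simp
    show "x *\<^sub>v v = 1\<^sub>m n *\<^sub>v v"
    proof (rule eq_vecI)
      fix i assume "i < dim_vec (1\<^sub>m n *\<^sub>v v)"
      then have i: "i < n" by simp
      note dims = v Bc Nc zic xc i
      have a: "(x *\<^sub>v v) $ i = (zi *\<^sub>v v) $ i - (N *\<^sub>v v) $ i"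
        using vidx[OF X, of i] dims by (simp del: index_mult_mat_vec)
      have b: "(N *\<^sub>v v) $ i + (B *\<^sub>v (zi *\<^sub>v v)) $ i = 0"
        using vidx[OF M, of i] dims by (simp del: index_mult_mat_vec)
      have c: "(zi *\<^sub>v v) $ i + (B *\<^sub>v (zi *\<^sub>v v)) $ i = v $ i"
        using vidx[OF F3, of i] dims by (simp del: index_mult_mat_vec)
      show "(x *\<^sub>v v) $ i = (1\<^sub>m n *\<^sub>v v) $ i" using lin3[OF a b c] v by simp
    qed (use xc in simp)
  qed
  then show False using assms(5) by simp
qed

end
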